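(* Fix $n\ge1$. Define $i_n:\mathrm{Conf}_n(\mathbb C)\to\mathrm{Conf}^{lf}_\infty(\mathbb C)$ by $i_n(z_1,\dots,z_n)=(z_1,\dots,z_n,R,R+1,R+2,\dots)$ where $R=1+\max_j|z_j|$. Then $i_n$ is continuous with $i_n(1,2,\dots,n)=\widetilde{\mathbb N}$, and the induced homomorphism \[ (i_n)_*:\pi_1\bigl(\mathrm{Conf}_n(\mathbb C),(1,\dots,n)\bigr)\to\pi_1\bigl(\mathrm{Conf}^{lf}_\infty(\mathbb C),\widetilde{\mathbb N}\bigr) \] is injective.
   Context: $\mathrm{Conf}_n(\mathbb C)=\{(z_1,\dots,z_n)\in\mathbb C^n: z_i\ne z_j \text{ for } i\neq j\}$ with the usual topology. $\mathrm{Conf}^{lf}_\infty(\mathbb C)$ is the set of sequences $(x_j)_{j\ge1}$ of pairwise distinct complex numbers such that $\{j:|x_j|\le R\}$ is finite for all $R>0$, with metric $d_{\Sigma}(x,y)=\sum_j2^{-j}\min\{|x_j-y_j|,1\}+d_{\mathcal V}(P(x),P(y))$, where $P(x)=\{x_j\}$ and $d_{\mathcal V}$ is the vague metric $d_{\mathcal V}(A,B)=\sum_j 2^{-j}\frac{|\sum_{a\in A}\varphi_j(a)-\sum_{b\in B}\varphi_j(b)|}{1+|\sum_{a\in A}\varphi_j(a)-\sum_{b\in B}\varphi_j(b)|}$ for a fixed sequence $(\varphi_j)$ of compactly supported continuous real functions such that for each $m$ those supported in $\{|z|\le m\}$ are sup-norm dense among such functions supported in $\{|z|\le m\}$. $\widetilde{\mathbb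 N}=(1,2,3,\dots)$. *)

theory Defs
  imports "HOL-Analysis.Analysis"
begin

text \<open>Conf_n(C) as a subspace of C^n = product topology over the index set {..<n}
  (coordinates z 0, ..., z (n-1) correspond to z_1, ..., z_n).\<close>

definition conf_set :: "nat \<Rightarrow> (nat \<Rightarrow> complex) set" where
  "conf_set n = {z \<in> PiE {..<n} (\<lambda>_. UNIV). inj_on z {..<n}}"

definition conf_top :: "nat \<Rightarrow> (nat \<Rightarrow> complex) topology" where
  "conf_top n = subtopology (product_topology (\<lambda>_. euclidean) {..<n}) (conf_set n)"

definition conf_base :: "nat \<Rightarrow> nat \<Rightarrow> complex" where
  "conf_base n = restrict (\<lambda>j. of_nat (Suc j)) {..<n}"

text \<open>Locally finite infinite configurations: sequences indexed from 0 (x 0 = x_1).\<close>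
definition conf_lf_set :: "(nat \<Rightarrow> complex) set" where
  "conf_lf_set = {x. inj x \<and> (\<forall>R>0. finite {j. cmod (x j) \<le> R})}"

definition Ntilde :: "nat \<Rightarrow> complex" where
  "Ntilde = (\<lambda>j. of_nat (Suc j))"

definition lfsum :: "(complex \<Rightarrow> real) \<Rightarrow> complex set \<Rightarrow> real" where
  "lfsum f A = (\<Sum>a\<in>{a\<in>A. f a \<noteq> 0}. f a)"

text \<open>Admissible test function sequence (phi (k) = phi_{k+1}).\<close>
definition vague_family :: "(nat \<Rightarrow> complex \<Rightarrow> real) \<Rightarrow> bool" where
  "vague_family \<phi> \<longleftrightarrow>
     (\<forall>j. continuous_on UNIV (\<phi> j) \<and> compact (closure {z. \<phi> j z \<noteq> 0})) \<and>
     (\<forall>m::nat. m \<ge> 1 \<longrightarrow>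
        (\<forall>f :: complex \<Rightarrow> real. continuous_on UNIV f \<and> closure {z. f z \<noteq> 0} \<subseteq> cball 0 (real m)
           \<longrightarrow> (\<forall>e>0. \<exists>j. closure {z. \<phi> j z \<noteq> 0} \<subseteq> cball 0 (real m) \<and>
                          (\<forall>z. \<bar>f z - \<phi> j z\<bar> < e))))"

definition vague_dist :: "(nat \<Rightarrow> complex \<Rightarrow> real) \<Rightarrow> complex set \<Rightarrow> complex set \<Rightarrow> real" where
  "vague_dist \<phi> A B =
     (\<Sum>k. (1/2) ^ Suc k * (\<bar>lfsum (\<phi> k) A - lfsum (\<phi> k) B\<bar> /
                              (1 + \<bar>lfsum (\<phi> k) A - lfsum (\<phi> k) B\<bar>)))"

definition sigma_dist :: "(nat \<Rightarrow> complex \<Rightarrow> real) \<Rightarrow> (nat \<Rightarrow> complex) \<Rightarrow> (nat \<Rightarrow> complex) \<Rightarrow> real" where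
  "sigma_dist \<phi> x y =
     (\<Sum>k. (1/2) ^ Suc k * min (cmod (x k - y k)) 1) + vague_dist \<phi> (range x) (range y)"

definition conf_lf_top :: "(nat \<Rightarrow> complex \<Rightarrow> real) \<Rightarrow> (nat \<Rightarrow> complex) topology" where
  "conf_lf_top \<phi> = Metric_space.mtopology conf_lf_set (sigma_dist \<phi>)"

definition incl :: "nat \<Rightarrow> (nat \<Rightarrow> complex) \<Rightarrow> nat \<Rightarrow> complex" where
  "incl n z = (let R = 1 + Max ((\<lambda>j. cmod (z j)) ` {..<n})
               in (\<lambda>j. if j < n then z j else complex_of_real R + of_nat (j - n)))"

definition based_loop :: "'a topology \<Rightarrow> 'a \<Rightarrow> (real \<Rightarrow> 'a) \<Rightarrow> bool" where
  "based_loop X a g \<longleftrightarrow> pathin X g \<and> g 0 = a \<and> g 1 = a"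

definition loop_homotopic :: "'a topology \<Rightarrow> 'a \<Rightarrow> (real \<Rightarrow> 'a) \<Rightarrow> (real \<Rightarrow> 'a) \<Rightarrow> bool" where
  "loop_homotopic X a g h \<longleftrightarrow>
     homotopic_with (\<lambda>k. k 0 = a \<and> k 1 = a) (top_of_set {0..1}) X g h"

end

theory Submission
  imports Defs
begin


lemma half_sums: "(\<lambda>k. (1/2::real)^Suc k) sums 1"
proof -
  have "(\<lambda>k. (1/2::real) * (1/2)^k) sums ((1/2) * (1 / (1 - 1/2)))"
    by (intro sums_mult geometric_sums) simp
  then show ?thesis by simp
qed

lemma wsum_summable:
  assumes "\<And>k. 0 \<le> f k" "\<And>k. f k \<le> 1"
  shows "summable (\<lambda>k. (1/2::real)^Suc k * f k)"
proof (rule summable_comparison_test[OF _ sums_summable[OF half_sums]])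
  show "\<exists>N. \<forall>n\<ge>N. norm ((1/2::real)^Suc n * f n) \<le> (1/2)^Suc n"
    using assms by (auto intro!: mult_left_le_one_le simp: abs_mult)
qed

lemma frac_tri:
  fixes a b c :: real
  shows "\<bar>a - c\<bar> / (1 + \<bar>a - c\<bar>) \<le> \<bar>a - b\<bar> / (1 + \<bar>a - b\<bar>) + \<bar>b - c\<bar> / (1 + \<bar>b - c\<bar>)"
proof -
  define s where "s = \<bar>a - b\<bar>"
  define t where "t = \<bar>b - c\<bar>"
  define u where "u = \<bar>a - c\<bar>"
  have st: "s \<ge> 0" "t \<ge> 0" "u \<ge> 0" "u \<le> s + t" unfolding s_def t_def u_def by auto
  have "u / (1 + u) \<le> (s + t) / (1 + (s + t))"
    using st by (simp add: divide_simps) (simp add: algebra_simps)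
  also have "\<dots> \<le> s / (1 + s) + t / (1 + t)"
    using st by (simp add: divide_simps) (simp add: algebra_simps mult_nonneg_nonneg)
  finally show ?thesis unfolding s_def t_def u_def .
qed

lemma min_tri: "(a::real) \<le> b + c \<Longrightarrow> 0 \<le> b \<Longrightarrow> 0 \<le> c \<Longrightarrow> min a 1 \<le> min b 1 + min c 1"
  by linarith

lemma frac_bounds: "0 \<le> \<bar>x::real\<bar> / (1 + \<bar>x\<bar>)" "\<bar>x::real\<bar> / (1 + \<bar>x\<bar>) \<le> 1"
  by auto

lemma sd1_summable: "summable (\<lambda>k. (1/2::real) ^ Suc k * min (cmod (x k - y k)) 1)"
  by (rule wsum_summable) auto

lemma vd_summable: "summable (\<lambda>k. (1/2::real) ^ Suc k * (\<bar>lfsum (\<phi> k) A - lfsum (\<phi> k) B\<bar> /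
                              (1 + \<bar>lfsum (\<phi> k) A - lfsum (\<phi> k) B\<bar>)))"
  by (rule wsum_summable) auto

lemma sigma_metric: "Metric_space conf_lf_set (sigma_dist \<phi>)"
proof
  fix x y z :: "nat \<Rightarrow> complex"
  show "0 \<le> sigma_dist \<phi> x y"
    unfolding sigma_dist_def vague_dist_def
    by (intro add_nonneg_nonneg suminf_nonneg sd1_summable vd_summable) auto
  show "sigma_dist \<phi> x y = sigma_dist \<phi> y x"
    unfolding sigma_dist_def vague_dist_def by (simp add: norm_minus_commute abs_minus_commute)
  show "sigma_dist \<phi> x y = 0 \<longleftrightarrow> x = y"
  proof
    assume h: "sigma_dist \<phi> x y = 0"
    have a: "0 \<le> (\<Sum>k. (1/2::real) ^ Suc k * min (cmod (x k - y k)) 1)"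
      by (intro suminf_nonneg sd1_summable) auto
    have b: "0 \<le> vague_dist \<phi> (range x) (range y)"
      unfolding vague_dist_def by (intro suminf_nonneg vd_summable) auto
    have "(\<Sum>k. (1/2::real) ^ Suc k * min (cmod (x k - y k)) 1) = 0"
      using h a b unfolding sigma_dist_def by linarith
    then have "\<forall>k. (1/2::real) ^ Suc k * min (cmod (x k - y k)) 1 = 0"
      by (subst (asm) suminf_eq_zero_iff[OF sd1_summable]) auto
    then have "\<forall>k. min (cmod (x k - y k)) 1 = 0" by simp
    then have "\<forall>k. cmod (x k - y k) = 0" by (metis min_def zero_neq_one)
    then show "x = y" by (auto simp: fun_eq_iff)
  next
    assume "x = y" then show "sigma_dist \<phi> x y = 0"
      unfolding sigma_dist_def vague_dist_def by simp
  qed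
  show "sigma_dist \<phi> x z \<le> sigma_dist \<phi> x y + sigma_dist \<phi> y z"
  proof -
    have 1: "(\<Sum>k. (1/2::real) ^ Suc k * min (cmod (x k - z k)) 1) \<le>
          (\<Sum>k. (1/2::real) ^ Suc k * min (cmod (x k - y k)) 1) + (\<Sum>k. (1/2::real) ^ Suc k * min (cmod (y k - z k)) 1)"
    proof -
      have "(\<Sum>k. (1/2::real) ^ Suc k * min (cmod (x k - z k)) 1) \<le>
          (\<Sum>k. (1/2::real) ^ Suc k * min (cmod (x k - y k)) 1 + (1/2::real) ^ Suc k * min (cmod (y k - z k)) 1)"
      proof (rule suminf_le[OF _ sd1_summable summable_add[OF sd1_summable sd1_summable]])
        fix k
        have "min (cmod (x k - z k)) 1 \<le> min (cmod (x k - y k)) 1 + min (cmod (y k - z k)) 1"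
          using min_tri[OF _ norm_ge_zero norm_ge_zero] norm_triangle_ineq[of "x k - y k" "y k - z k"] by simp
        then show "(1/2::real) ^ Suc k * min (cmod (x k - z k)) 1 \<le> (1/2::real) ^ Suc k * min (cmod (x k - y k)) 1 + (1/2::real) ^ Suc k * min (cmod (y k - z k)) 1"
          by (simp add: distrib_left[symmetric])
      qed
      then show ?thesis by (simp only: suminf_add[OF sd1_summable sd1_summable])
    qed
    have 2: "vague_dist \<phi> (range x) (range z) \<le> vague_dist \<phi> (range x) (range y) + vague_dist \<phi> (range y) (range z)"
    proof -
      let ?A = "range x" and ?B = "range y" and ?C = "range z"
      show ?thesis unfolding vague_dist_def
        apply (subst suminf_add[OF vd_summable vd_summable])
        apply (rule suminf_le[OF _ vd_summable summable_add[OF vd_summable vd_summable]])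
        apply (simp only: distrib_left[symmetric])
        apply (rule mult_left_mono[OF frac_tri])
        apply simp
        done
    qed
    show ?thesis using 1 2 unfolding sigma_dist_def by linarith
  qed
qed



definition Rz :: "nat \<Rightarrow> (nat \<Rightarrow> complex) \<Rightarrow> real" where
  "Rz n z = 1 + Max ((\<lambda>j. cmod (z j)) ` {..<n})"

lemma incl_eq: "incl n z j = (if j < n then z j else complex_of_real (Rz n z + real (j - n)))"
  unfolding incl_def Rz_def Let_def by simp

lemma Rz_gt: "j < n \<Longrightarrow> cmod (z j) < Rz n z"
proof -
  assume "j < n"
  then have "cmod (z j) \<le> Max ((\<lambda>j. cmod (z j)) ` {..<n})" by (intro Max_ge) auto
  then show ?thesis unfolding Rz_def by linarith
qed

lemma Rz_pos: "n \<ge> 1 \<Longrightarrow> Rz n z > 0"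
  using Rz_gt[of 0 n z] norm_ge_zero[of "z 0"] by linarith

lemma incl_norm_ge: "n \<ge> 1 \<Longrightarrow> \<not> j < n \<Longrightarrow> cmod (incl n z j) = Rz n z + real (j - n)"
proof -
  assume a: "n \<ge> 1" "\<not> j < n"
  have "incl n z j = complex_of_real (Rz n z + real (j - n))"
    using a(2) by (simp only: incl_eq if_False)
  then have "cmod (incl n z j) = \<bar>Rz n z + real (j - n)\<bar>" by (simp only: norm_of_real)
  then show ?thesis using Rz_pos[OF a(1), of z] by simp
qed

lemma topspace_conf_top: "topspace (conf_top n) = conf_set n"
  unfolding conf_top_def conf_set_def by auto

lemma topspace_conf_lf_top: "topspace (conf_lf_top \<phi>) = conf_lf_set"
  unfolding conf_lf_top_def using Metric_space.topspace_mtopology[OF sigma_metric] by blast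

lemma incl_inj:
  assumes "z \<in> conf_set n" "n \<ge> 1"
  shows "inj (incl n z)"
proof (rule injI)
  fix i j assume h: "incl n z i = incl n z j"
  have iz: "inj_on z {..<n}" using assms unfolding conf_set_def by auto
  show "i = j"
  proof (cases "i < n"; cases "j < n")
    assume "i < n" "j < n" then show ?thesis using h iz by (auto simp: incl_eq inj_on_def)
  next
    assume a: "i < n" "\<not> j < n"
    then have "cmod (incl n z i) < cmod (incl n z j)"
      using Rz_gt[of i n z] incl_norm_ge[OF assms(2) a(2)] by (simp add: incl_eq)
    then show ?thesis using h by simp
  next
    assume a: "\<not> i < n" "j < n"
    then have "cmod (incl n z j) < cmod (incl n z i)"
      using Rz_gt[of j n z] incl_norm_ge[OF assms(2) a(1)] by (simp add: incl_eq)
    then show ?thesis using h by simp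
  next
    assume a: "\<not> i < n" "\<not> j < n"
    then have "Rz n z + real (i - n) = Rz n z + real (j - n)"
      using h by (simp add: incl_eq)
    then show ?thesis using a by simp
  qed
qed

lemma incl_lf_finite:
  assumes "n \<ge> 1"
  shows "{j. cmod (incl n z j) \<le> r} \<subseteq> {..< n + nat \<lceil>r\<rceil> + 1}"
proof
  fix j assume "j \<in> {j. cmod (incl n z j) \<le> r}"
  then have j: "cmod (incl n z j) \<le> r" by simp
  show "j \<in> {..< n + nat \<lceil>r\<rceil> + 1}"
  proof (cases "j < n")
    case False
    then have "Rz n z + real (j - n) \<le> r" using j incl_norm_ge[OF assms] by simp
    then have "real (j - n) < r" using Rz_pos[OF assms, of z] by linarith
    then have "j - n < nat \<lceil>r\<rceil>" by linarith
    then show ?thesis by simp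
  qed simp
qed

lemma incl_in_lf:
  assumes "z \<in> conf_set n" "n \<ge> 1"
  shows "incl n z \<in> conf_lf_set"
  unfolding conf_lf_set_def
  using incl_inj[OF assms] incl_lf_finite[OF assms(2)]
  by (auto intro: finite_subset)

lemma incl_base: "n \<ge> 1 \<Longrightarrow> incl n (conf_base n) = Ntilde"
proof -
  assume "n \<ge> 1" then have False: "n \<noteq> 0" by simp
  have M: "Max ((\<lambda>j. cmod (conf_base n j)) ` {..<n}) = real n"
  proof (rule Max_eqI)
    show "finite ((\<lambda>j. cmod (conf_base n j)) ` {..<n})" by simp
    show "y \<le> real n" if "y \<in> (\<lambda>j. cmod (conf_base n j)) ` {..<n}" for y
      using that by (auto simp: conf_base_def norm_of_nat simp del: of_nat_Suc)
    show "real n \<in> (\<lambda>j. cmod (conf_base n j)) ` {..<n}"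
      using False by (intro image_eqI[of _ _ "n - 1"]) (auto simp: conf_base_def norm_of_nat simp del: of_nat_Suc)
  qed
  show ?thesis
    unfolding incl_def Let_def M
    by (auto simp: fun_eq_iff Ntilde_def conf_base_def of_nat_diff)
qed

definition proj :: "nat \<Rightarrow> (nat \<Rightarrow> complex) \<Rightarrow> nat \<Rightarrow> complex" where
  "proj n x = restrict x {..<n}"

lemma proj_incl: "z \<in> conf_set n \<Longrightarrow> proj n (incl n z) = z"
  unfolding conf_set_def proj_def
  by (auto simp: fun_eq_iff incl_eq PiE_def extensional_def)

lemma proj_Ntilde: "proj n Ntilde = conf_base n"
  unfolding proj_def Ntilde_def conf_base_def by simp

lemma coord_le_sigma: "(1/2::real)^Suc j * min (cmod (x j - y j)) 1 \<le> sigma_dist \<phi> x y"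
proof -
  have "(1/2::real)^Suc j * min (cmod (x j - y j)) 1 = (\<Sum>k\<in>{j}. (1/2::real)^Suc k * min (cmod (x k - y k)) 1)"
    by simp
  also have "\<dots> \<le> (\<Sum>k. (1/2::real)^Suc k * min (cmod (x k - y k)) 1)"
    by (rule sum_le_suminf[OF sd1_summable]) auto
  also have "\<dots> \<le> sigma_dist \<phi> x y"
  proof -
    have "0 \<le> vague_dist \<phi> (range x) (range y)"
      unfolding vague_dist_def by (intro suminf_nonneg vd_summable) auto
    then show ?thesis unfolding sigma_dist_def by linarith
  qed
  finally show ?thesis .
qed

lemma coord_cont: "continuous_map (conf_lf_top \<phi>) euclidean (\<lambda>x. x j)"
proof -
  interpret S: Metric_space conf_lf_set "sigma_dist \<phi>" by (rule sigma_metric)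
  have "continuous_map S.mtopology Met_TC.mtopology (\<lambda>x. x j)"
  proof (subst S.metric_continuous_map[OF Met_TC.Metric_space_axioms], intro conjI ballI allI impI)
    fix a :: "nat \<Rightarrow> complex" and e :: real assume "a \<in> conf_lf_set" "e > 0"
    define d where "d = (1/2::real)^Suc j * min e 1"
    have d: "d > 0" using \<open>e > 0\<close> by (simp add: d_def)
    have "dist (a j) (x j) < e" if "sigma_dist \<phi> a x < d" for x
    proof -
      have "(1/2::real)^Suc j * min (cmod (a j - x j)) 1 < (1/2::real)^Suc j * min e 1"
        using coord_le_sigma[of j a x \<phi>] that d_def by linarith
      then have "min (cmod (a j - x j)) 1 < min e 1" by simp
      then show ?thesis by (auto simp: dist_norm min_def split: if_splits)
    qed
    then show "\<exists>\<delta>>0. \<forall>x. x \<in> conf_lf_set \<and> sigma_dist \<phi> a x < \<delta> \<longrightarrow> dist (a j) (x j) < e"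
      using d by blast
  qed simp
  then show ?thesis unfolding conf_lf_top_def by simp
qed

lemma proj_cont:
  assumes "n \<ge> 1"
  shows "continuous_map (conf_lf_top \<phi>) (conf_top n) (proj n)"
  unfolding conf_top_def continuous_map_in_subtopology
proof
  show "continuous_map (conf_lf_top \<phi>) (product_topology (\<lambda>_. euclidean) {..<n}) (proj n)"
    unfolding continuous_map_componentwise
    by (auto simp: proj_def coord_cont)
  show "proj n \<in> topspace (conf_lf_top \<phi>) \<rightarrow> conf_set n"
    unfolding topspace_conf_lf_top conf_lf_set_def conf_set_def proj_def
    by (auto simp: inj_on_def inj_def)
qed



lemma Max_cont:
  assumes "finite I" "I \<noteq> {}" "\<And>i. i \<in> I \<Longrightarrow> continuous_map X euclideanreal (f i)"
  shows "continuous_map X euclideanreal (\<lambda>x. Max ((\<lambda>i. f i x) ` I))"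
  using assms
proof (induction I rule: finite_ne_induct)
  case (singleton a) then show ?case by simp
next
  case (insert a F)
  have eq: "(\<lambda>x. Max ((\<lambda>i. f i x) ` insert a F)) = (\<lambda>x. max (f a x) (Max ((\<lambda>i. f i x) ` F)))"
    using insert by (simp add: Max_insert)
  have IH: "continuous_map X euclideanreal (\<lambda>x. Max ((\<lambda>i. f i x) ` F))"
    by (rule insert.IH) (use insert.prems in auto)
  have fa: "continuous_map X euclideanreal (f a)" using insert.prems by simp
  show ?case unfolding eq by (rule continuous_map_real_max[OF fa IH])
qed

lemma zcoord_cont: "j < n \<Longrightarrow> continuous_map (conf_top n) euclidean (\<lambda>z. z j)"
  unfolding conf_top_def
  by (intro continuous_map_from_subtopology continuous_map_product_projection) auto

lemma Rz_cont: "n \<ge> 1 \<Longrightarrow> continuous_map (conf_top n) euclideanreal (Rz n)"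
  unfolding Rz_def
proof -
  assume n: "n \<ge> 1"
  have "continuous_map (conf_top n) euclideanreal (\<lambda>z. Max ((\<lambda>j. cmod (z j)) ` {..<n}))"
    by (rule Max_cont) (use n in \<open>auto intro!: continuous_map_norm zcoord_cont simp: lessThan_empty_iff\<close>)
  then show "continuous_map (conf_top n) euclideanreal (\<lambda>z. 1 + Max ((\<lambda>j. cmod (z j)) ` {..<n}))"
    by (intro continuous_map_add) auto
qed

lemma incl_coord_cont:
  assumes "n \<ge> 1"
  shows "continuous_map (conf_top n) euclidean (\<lambda>z. incl n z j)"
proof (cases "j < n")
  case True
  have "(\<lambda>z. incl n z j) = (\<lambda>z. z j)" by (rule ext) (simp only: incl_eq if_P[OF True])
  then show ?thesis using zcoord_cont[OF True] by (simp only:)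
next
  case False
  have "continuous_map (conf_top n) euclidean ((\<lambda>r. complex_of_real (r + real (j - n))) \<circ> Rz n)"
    by (rule continuous_map_compose[OF Rz_cont[OF assms]])
       (simp add: continuous_on_of_real_id continuous_intros)
  moreover have "(\<lambda>z. incl n z j) = (\<lambda>r. complex_of_real (r + real (j - n))) \<circ> Rz n"
    by (rule ext) (simp only: incl_eq if_not_P[OF False] o_def)
  ultimately show ?thesis by (simp only:)
qed

lemma lfsum_incl:
  assumes "n \<ge> 1" "z \<in> conf_set n" "\<And>w. f w \<noteq> 0 \<Longrightarrow> cmod w \<le> M"
  shows "lfsum f (range (incl n z)) = (\<Sum>j<n + nat \<lceil>M\<rceil> + 1. f (incl n z j))"
proof -
  let ?N = "n + nat \<lceil>M\<rceil> + 1"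
  have sub: "{a \<in> range (incl n z). f a \<noteq> 0} \<subseteq> incl n z ` {..<?N}"
  proof
    fix a assume "a \<in> {a \<in> range (incl n z). f a \<noteq> 0}"
    then obtain j where j: "a = incl n z j" "f a \<noteq> 0" by auto
    then have "cmod (incl n z j) \<le> M" using assms(3) by auto
    then have "j \<in> {..<?N}" using incl_lf_finite[OF assms(1), of z M] by auto
    then show "a \<in> incl n z ` {..<?N}" using j by auto
  qed
  have "lfsum f (range (incl n z)) = (\<Sum>a\<in>incl n z ` {..<?N}. f a)"
    unfolding lfsum_def
    by (rule sum.mono_neutral_left[OF _ sub]) auto
  also have "\<dots> = (\<Sum>j<?N. f (incl n z j))"
  proof -
    have "inj_on (incl n z) {..<?N}" using incl_inj[OF assms(2,1)] inj_on_subset by blast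
    from sum.reindex[OF this, of f] show ?thesis by (simp only: o_def)
  qed
  finally show ?thesis .
qed

lemma vague_bound:
  assumes "vague_family \<phi>"
  shows "\<exists>M. \<forall>w. \<phi> k w \<noteq> 0 \<longrightarrow> cmod w \<le> M"
proof -
  have "\<forall>j. continuous_on UNIV (\<phi> j) \<and> compact (closure {z. \<phi> j z \<noteq> 0})"
    using assms unfolding vague_family_def by (rule conjunct1)
  then have "compact (closure {z. \<phi> k z \<noteq> 0})" by blast
  then have "bounded (closure {z. \<phi> k z \<noteq> 0})" by (rule compact_imp_bounded)
  from bounded_iff[THEN iffD1, OF this] obtain M where M: "\<forall>x\<in>closure {z. \<phi> k z \<noteq> 0}. norm x \<le> M" ..
  have "\<And>w. \<phi> k w \<noteq> 0 \<Longrightarrow> cmod w \<le> M"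
  proof -
    fix w assume "\<phi> k w \<noteq> 0"
    then have "w \<in> {z. \<phi> k z \<noteq> 0}" by simp
    then have "w \<in> closure {z. \<phi> k z \<noteq> 0}" by (rule closure_subset[THEN subsetD])
    with M show "cmod w \<le> M" by (rule bspec)
  qed
  then show ?thesis by blast
qed

lemma L_cont:
  assumes "n \<ge> 1" "vague_family \<phi>"
  shows "continuous_map (conf_top n) euclideanreal (\<lambda>z. lfsum (\<phi> k) (range (incl n z)))"
proof -
  obtain M where M: "\<And>w. \<phi> k w \<noteq> 0 \<Longrightarrow> cmod w \<le> M" using vague_bound[OF assms(2), of k] by blast
  have phic: "continuous_map euclidean euclideanreal (\<phi> k)"
  proof -
    have "\<forall>j. continuous_on UNIV (\<phi> j) \<and> compact (closure {z. \<phi> j z \<noteq> 0})"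
      using assms(2) unfolding vague_family_def by (rule conjunct1)
    then have "continuous_on UNIV (\<phi> k)" by blast
    then show ?thesis by (simp only: continuous_map_iff_continuous2)
  qed
  have "continuous_map (conf_top n) euclideanreal (\<lambda>z. (\<Sum>j<n + nat \<lceil>M\<rceil> + 1. \<phi> k (incl n z j)))"
  proof (intro continuous_map_sum)
    fix j
    show "continuous_map (conf_top n) euclideanreal (\<lambda>z. \<phi> k (incl n z j))"
      using continuous_map_compose[OF incl_coord_cont[OF assms(1), of j] phic] unfolding o_def .
  qed (rule finite_lessThan)
  then show ?thesis
  proof (rule continuous_map_eq)
    fix z assume "z \<in> topspace (conf_top n)"
    then have "z \<in> conf_set n" by (simp add: topspace_conf_top)
    from lfsum_incl[OF assms(1) this M] 
    show "(\<Sum>j<n + nat \<lceil>M\<rceil> + 1. \<phi> k (incl n z j)) = lfsum (\<phi> k) (range (incl n z))"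
      by (rule sym)
  qed
qed



lemma frac_le_abs: "\<bar>x::real\<bar> / (1 + \<bar>x\<bar>) \<le> \<bar>x\<bar>"
  by (simp add: divide_le_eq algebra_simps)

lemma tail_sums: "(\<lambda>k. if k < K then 0 else (1/2::real)^Suc k) sums ((1/2)^K)"
proof -
  define g where "g = (\<lambda>k. if k < K then 0 else (1/2::real)^Suc k)"
  have "(\<lambda>i. (1/2::real)^K * (1/2)^Suc i) sums ((1/2)^K * 1)"
    by (rule sums_mult[OF half_sums])
  moreover have "(\<lambda>i. g (i + K)) = (\<lambda>i. (1/2::real)^K * (1/2)^Suc i)"
    by (simp add: g_def fun_eq_iff power_add)
  ultimately have A: "(\<lambda>i. g (i + K)) sums ((1/2)^K)" by simp
  have B: "(\<Sum>i<K. g i) = 0" by (simp add: g_def)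
  from sums_iff_shift[THEN iffD1, OF A] have "g sums ((1/2)^K + (\<Sum>i<K. g i))" .
  then show ?thesis unfolding B g_def by simp
qed

lemma incl_cont:
  assumes n: "n \<ge> 1" and vf: "vague_family \<phi>"
  shows "continuous_map (conf_top n) (conf_lf_top \<phi>) (incl n)"
proof -
  interpret S: Metric_space conf_lf_set "sigma_dist \<phi>" by (rule sigma_metric)
  define L where "L k z = lfsum (\<phi> k) (range (incl n z))" for k z
  show ?thesis unfolding conf_lf_top_def S.continuous_map_to_metric
  proof (intro ballI allI impI)
    fix z0 and \<epsilon> :: real
    assume z0: "z0 \<in> topspace (conf_top n)" and e: "\<epsilon> > 0"
    obtain K where K: "(1/2::real)^K < \<epsilon>/4" using real_arch_pow_inv[of "\<epsilon>/4" "1/2::real"] e by auto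
    define F where "F z = (\<Sum>j<Suc n. cmod (incl n z j - incl n z0 j)) + (\<Sum>k<K. \<bar>L k z - L k z0\<bar>)" for z
    have Fc: "continuous_map (conf_top n) euclideanreal F"
    proof -
      have 1: "continuous_map (conf_top n) euclideanreal (\<lambda>z. \<Sum>j<Suc n. cmod (incl n z j - incl n z0 j))"
        by (intro continuous_map_sum continuous_map_norm continuous_map_diff incl_coord_cont[OF n]) auto
      have 2: "continuous_map (conf_top n) euclideanreal (\<lambda>z. \<Sum>k<K. \<bar>L k z - L k z0\<bar>)"
        unfolding L_def
        by (intro continuous_map_sum continuous_map_real_abs continuous_map_diff L_cont[OF n vf]) auto
      show ?thesis unfolding F_def by (rule continuous_map_add[OF 1 2])
    qed
    define U where "U = {z \<in> topspace (conf_top n). F z \<in> {..<\<epsilon>/4}}"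
    have Uo: "openin (conf_top n) U"
      unfolding U_def by (rule openin_continuous_map_preimage[OF Fc]) (simp add: open_openin[symmetric])
    have z0U: "z0 \<in> U" using z0 e unfolding U_def F_def by simp
    have "incl n z \<in> S.mball (incl n z0) \<epsilon>" if zU: "z \<in> U" for z
    proof -
      have z: "z \<in> conf_set n" and Fz: "F z < \<epsilon>/4" using zU unfolding U_def by (auto simp: topspace_conf_top)
      have z0': "z0 \<in> conf_set n" using z0 by (simp add: topspace_conf_top)
      have s1nn: "0 \<le> (\<Sum>j<Suc n. cmod (incl n z j - incl n z0 j))" by (rule sum_nonneg) simp
      have s2nn: "0 \<le> (\<Sum>k<K. \<bar>L k z - L k z0\<bar>)" by (rule sum_nonneg) simp
      have c1: "cmod (incl n z0 j - incl n z j) \<le> F z" for j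
      proof -
        have "\<exists>i<Suc n. incl n z j - incl n z0 j = incl n z i - incl n z0 i"
        proof (cases "j \<le> n")
          case True then show ?thesis by (intro exI[of _ j]) auto
        next
          case False
          then have "incl n z j - incl n z0 j = incl n z n - incl n z0 n"
            by (simp add: incl_eq)
          then show ?thesis by blast
        qed
        then obtain i where i: "i < Suc n" "incl n z j - incl n z0 j = incl n z i - incl n z0 i" by blast
        have "cmod (incl n z i - incl n z0 i) \<le> (\<Sum>j<Suc n. cmod (incl n z j - incl n z0 j))"
          by (rule member_le_sum) (use i in auto)
        moreover have "cmod (incl n z0 j - incl n z j) = cmod (incl n z i - incl n z0 i)"
          using i(2) by (metis norm_minus_commute)
        ultimately show ?thesis using s2nn unfolding F_def by linarith
      qed
      have c2: "\<bar>L k z0 - L k z\<bar> \<le> F z" if "k < K" for k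
      proof -
        have "\<bar>L k z - L k z0\<bar> \<le> (\<Sum>k<K. \<bar>L k z - L k z0\<bar>)"
          by (rule member_le_sum) (use that in auto)
        then show ?thesis using s1nn unfolding F_def by (simp add: abs_minus_commute)
      qed
      have first: "(\<Sum>k. (1/2::real) ^ Suc k * min (cmod (incl n z0 k - incl n z k)) 1) \<le> \<epsilon>/4"
      proof -
        have sm: "(\<lambda>k. (1/2::real) ^ Suc k * (\<epsilon>/4)) sums (1 * (\<epsilon>/4))"
          by (rule sums_mult2[OF half_sums])
        have "(\<Sum>k. (1/2::real) ^ Suc k * min (cmod (incl n z0 k - incl n z k)) 1) \<le> (\<Sum>k. (1/2::real) ^ Suc k * (\<epsilon>/4))"
        proof (rule suminf_le[OF _ sd1_summable sums_summable[OF sm]])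
          fix k
          have "min (cmod (incl n z0 k - incl n z k)) 1 \<le> \<epsilon>/4" using c1[of k] Fz by linarith
          then show "(1/2::real) ^ Suc k * min (cmod (incl n z0 k - incl n z k)) 1 \<le> (1/2::real) ^ Suc k * (\<epsilon>/4)"
            by (intro mult_left_mono) auto
        qed
        then show ?thesis using sums_unique[OF sm] by simp
      qed
      have second: "vague_dist \<phi> (range (incl n z0)) (range (incl n z)) \<le> \<epsilon>/4 + (1/2)^K"
      proof -
        have sm: "(\<lambda>k. (1/2::real) ^ Suc k * (\<epsilon>/4) + (if k < K then 0 else (1/2::real)^Suc k)) sums (1 * (\<epsilon>/4) + (1/2)^K)"
          by (rule sums_add[OF sums_mult2[OF half_sums] tail_sums])
        have "vague_dist \<phi> (range (incl n z0)) (range (incl n z)) \<le> (\<Sum>k. (1/2::real) ^ Suc k * (\<epsilon>/4) + (if k < K then 0 else (1/2::real)^Suc k))"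
          unfolding vague_dist_def
        proof (rule suminf_le[OF _ vd_summable sums_summable[OF sm]])
          fix k
          let ?x = "lfsum (\<phi> k) (range (incl n z0)) - lfsum (\<phi> k) (range (incl n z))"
          have "?x = L k z0 - L k z" unfolding L_def by simp
          show "(1/2::real) ^ Suc k * (\<bar>?x\<bar> / (1 + \<bar>?x\<bar>)) \<le> (1/2::real) ^ Suc k * (\<epsilon>/4) + (if k < K then 0 else (1/2::real)^Suc k)"
          proof (cases "k < K")
            case True
            have "\<bar>?x\<bar> / (1 + \<bar>?x\<bar>) \<le> \<epsilon>/4"
              using frac_le_abs[of ?x] c2[OF True] Fz \<open>?x = L k z0 - L k z\<close> by linarith
            then have "(1/2::real) ^ Suc k * (\<bar>?x\<bar> / (1 + \<bar>?x\<bar>)) \<le> (1/2::real) ^ Suc k * (\<epsilon>/4)"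
              by (rule mult_left_mono) simp
            then show ?thesis using True by (simp only: if_True add_0_right)
          next
            case False
            have "(1/2::real) ^ Suc k * (\<bar>?x\<bar> / (1 + \<bar>?x\<bar>)) \<le> (1/2::real) ^ Suc k"
              by (intro mult_left_le) auto
            moreover have "0 \<le> (1/2::real) ^ Suc k * (\<epsilon>/4)" using e by simp
            ultimately show ?thesis using False by simp
          qed
        qed
        then show ?thesis using sums_unique[OF sm] by simp
      qed
      have "sigma_dist \<phi> (incl n z0) (incl n z) < \<epsilon>"
        unfolding sigma_dist_def using first second K e by linarith
      then show ?thesis
        using incl_in_lf[OF z n] incl_in_lf[OF z0' n] by simp
    qed
    then show "\<exists>U. openin (conf_top n) U \<and> z0 \<in> U \<and> (\<forall>y\<in>U. incl n y \<in> S.mball (incl n z0) \<epsilon>)"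
      using Uo z0U by blast
  qed
qed



lemma retract_homotopic:
  assumes n: "n \<ge> 1" and g: "based_loop (conf_top n) (conf_base n) g"
  shows "homotopic_with (\<lambda>k. k 0 = conf_base n \<and> k 1 = conf_base n) (top_of_set {0..1}) (conf_top n)
           g (proj n \<circ> (incl n \<circ> g))"
proof (rule homotopic_with_equal)
  show "g 0 = conf_base n \<and> g 1 = conf_base n" using g unfolding based_loop_def by simp
  have gc: "continuous_map (top_of_set {0..1}) (conf_top n) g" using g unfolding based_loop_def pathin_def by simp
  show "continuous_map (top_of_set {0..1}) (conf_top n) g" by (rule gc)
  have "conf_base n \<in> conf_set n" unfolding conf_set_def conf_base_def by (auto simp: inj_on_def)
  then have pb: "proj n (incl n (conf_base n)) = conf_base n" by (rule proj_incl)
  show "(proj n \<circ> (incl n \<circ> g)) 0 = conf_base n \<and> (proj n \<circ> (incl n \<circ> g)) 1 = conf_base n"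
    using g pb unfolding based_loop_def by simp
  fix x assume "x \<in> topspace (top_of_set {0..1::real})"
  with continuous_map_funspace[OF gc] have "g x \<in> topspace (conf_top n)" by (rule funcset_mem)
  then have "g x \<in> conf_set n" by (simp add: topspace_conf_top)
  then show "g x = (proj n \<circ> (incl n \<circ> g)) x" by (simp add: proj_incl)
qed

theorem mainTheorem4:
  fixes n :: nat and \<phi> :: "nat \<Rightarrow> complex \<Rightarrow> real"
  assumes "n \<ge> 1" and "vague_family \<phi>"
  shows "continuous_map (conf_top n) (conf_lf_top \<phi>) (incl n)
       \<and> incl n (conf_base n) = Ntilde
       \<and> (\<forall>g h. based_loop (conf_top n) (conf_base n) g \<and> based_loop (conf_top n) (conf_base n) h
              \<and> loop_homotopic (conf_lf_top \<phi>) Ntilde (incl n \<circ> g) (incl n \<circ> h)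
              \<longrightarrow> loop_homotopic (conf_top n) (conf_base n) g h)"
proof (intro conjI allI impI)
  show "continuous_map (conf_top n) (conf_lf_top \<phi>) (incl n)" by (rule incl_cont[OF assms])
  show "incl n (conf_base n) = Ntilde" by (rule incl_base[OF assms(1)])
  fix g h
  assume H: "based_loop (conf_top n) (conf_base n) g \<and> based_loop (conf_top n) (conf_base n) h
              \<and> loop_homotopic (conf_lf_top \<phi>) Ntilde (incl n \<circ> g) (incl n \<circ> h)"
  have "homotopic_with (\<lambda>k. k 0 = Ntilde \<and> k 1 = Ntilde) (top_of_set {0..1}) (conf_lf_top \<phi>) (incl n \<circ> g) (incl n \<circ> h)"
    using H unfolding loop_homotopic_def by simp
  then have mid: "homotopic_with (\<lambda>k. k 0 = conf_base n \<and> k 1 = conf_base n) (top_of_set {0..1}) (conf_top n)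
      (proj n \<circ> (incl n \<circ> g)) (proj n \<circ> (incl n \<circ> h))"
    by (rule homotopic_with_compose_continuous_map_left[OF _ proj_cont[OF assms(1)]]) (simp add: proj_Ntilde)
  have A: "homotopic_with (\<lambda>k. k 0 = conf_base n \<and> k 1 = conf_base n) (top_of_set {0..1}) (conf_top n)
           g (proj n \<circ> (incl n \<circ> g))"
    using H by (intro retract_homotopic[OF assms(1)]) (elim conjE)
  have B: "homotopic_with (\<lambda>k. k 0 = conf_base n \<and> k 1 = conf_base n) (top_of_set {0..1}) (conf_top n)
           h (proj n \<circ> (incl n \<circ> h))"
    using H by (intro retract_homotopic[OF assms(1)]) (elim conjE)
  show "loop_homotopic (conf_top n) (conf_base n) g h"
    unfolding loop_homotopic_def
    by (rule homotopic_with_trans[OF A homotopic_with_trans[OF mid homotopic_with_symD[OF B]]])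
qed


end
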